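(* Let $G_4$ be the directed graph whose vertex set is $S_4$ (permutations in one-line notation $[u(1),u(2),u(3),u(4)]$), with a directed edge $\mathbf{u}\to\mathbf{v}$ if and only if $\max_{i\in\{1,2,3,4\}}\bigl(v^{-1}(i)-u^{-1}(i)\bigr)=1$. Let $g=(1,2,3,4)\in S_4$ (cycle notation) and $H=\langle g\rangle=\{[1,2,3,4],[2,3,4,1],[3,4,1,2],[4,1,2,3]\}$. Partition $S_4$ into the 6 cosets $\mathbf{h}H=\{\mathbf{h}\circ g^k : k=0,1,2,3\}$, where $(\mathbf{h}\circ g)(i)=h(g(i))$; concretely, the coset of $[a,b,c,d]$ is $\{[a,b,c,d],[b,c,d,a],[c,d,a,b],[d,a,b,c]\}$. Then each of these 6 sets is a dominating set of $G_4$, i.e., for each such set $D$, every vertex $\mathbf{u}\notin D$ has an edge $\mathbf{u}\to\mathbf{v}$ to some $\mathbf{v}\in D$.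
   Context: For a permutation $\mathbf{u}=[u(1),\dots,u(n)]$ in one-line notation, $u^{-1}(i)$ denotes the position of $i$ in the sequence. The quantity $\max_i(v^{-1}(i)-u^{-1}(i))$ is the rewriting cost of changing state $\mathbf{u}$ to state $\mathbf{v}$ via minimal-push-up operations. A set $D$ of vertices of a directed graph is a dominating set if every vertex not in $D$ is the initial vertex of an edge ending in a vertex of $D$. *)

theory Defs
  imports "HOL-Combinatorics.Permutations"
begin

text \<open>Permutations of S_4 are functions nat => nat permuting {1..4}; u i is the entry
  at position i (one-line notation), so inv u i is the position of i.\<close>

definition S4 :: "(nat \<Rightarrow> nat) set" where
  "S4 = {u. u permutes {1..4}}"

definition rewrite_cost :: "(nat \<Rightarrow> nat) \<Rightarrow> (nat \<Rightarrow> nat) \<Rightarrow> int" where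
  "rewrite_cost u v = Max ((\<lambda>i. int (inv v i) - int (inv u i)) ` {1..4})"

definition G4_edge :: "(nat \<Rightarrow> nat) \<Rightarrow> (nat \<Rightarrow> nat) \<Rightarrow> bool" where
  "G4_edge u v \<longleftrightarrow> u \<in> S4 \<and> v \<in> S4 \<and> rewrite_cost u v = 1"

definition dominating_set :: "'a set \<Rightarrow> ('a \<Rightarrow> 'a \<Rightarrow> bool) \<Rightarrow> 'a set \<Rightarrow> bool" where
  "dominating_set V E D \<longleftrightarrow> D \<subseteq> V \<and> (\<forall>u \<in> V - D. \<exists>v \<in> D. E u v)"

definition g4 :: "nat \<Rightarrow> nat" where
  "g4 i = (if i = 1 then 2 else if i = 2 then 3 else if i = 3 then 4 else if i = 4 then 1 else i)"

definition coset4 :: "(nat \<Rightarrow> nat) \<Rightarrow> (nat \<Rightarrow> nat) set" where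
  "coset4 h = {h \<circ> (g4 ^^ k) | k. k < 4}"

end

theory Submission
  imports Defs
begin

definition p2f :: "nat list \<Rightarrow> nat \<Rightarrow> nat" where
  "p2f xs i = (if i \<in> {1..4} then xs ! (i - 1) else i)"

fun index :: "nat list \<Rightarrow> nat \<Rightarrow> nat" where
  "index [] i = 0"
| "index (x # xs) i = (if x = i then 0 else Suc (index xs i))"

lemma index_lt: "i \<in> set xs \<Longrightarrow> index xs i < length xs"
  by (induction xs) auto

lemma nth_index: "i \<in> set xs \<Longrightarrow> xs ! index xs i = i"
  by (induction xs) auto

definition L :: "nat list list" where
  "L = filter distinct (List.n_lists 4 [1,2,3,4])"

definition costL :: "nat list \<Rightarrow> nat list \<Rightarrow> int" where
  "costL ys zs = Max (set (map (\<lambda>i. int (index zs i) - int (index ys i)) [1,2,3,4::nat]))"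

definition check :: bool where
  "check = list_all (\<lambda>xs. list_all (\<lambda>ys. list_ex (\<lambda>k. ys = rotate k xs) [0,1,2,3]
      \<or> list_ex (\<lambda>k. costL ys (rotate k xs) = 1) [0,1,2,3]) L) L"

lemma check_true: check
  unfolding check_def L_def costL_def by code_simp

lemma L_mem: "xs \<in> set L \<longleftrightarrow> distinct xs \<and> length xs = 4 \<and> set xs \<subseteq> {1,2,3,4}"
  unfolding L_def by (auto simp: set_n_lists)

lemma A: "u permutes {1..4} \<Longrightarrow> u = p2f (map u [1,2,3,4])"
proof
  fix i assume u: "u permutes {1..4}"
  show "u i = p2f (map u [1, 2, 3, 4]) i"
  proof (cases "i \<in> {1..4}")
    case True
    then have "i = 1 \<or> i = 2 \<or> i = 3 \<or> i = 4" by auto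
    then show ?thesis using True by (auto simp: p2f_def)
  next
    case False
    have "p2f (map u [1, 2, 3, 4]) i = i" using False unfolding p2f_def by (simp only: if_False)
    moreover have "u i = i" using permutes_not_in[OF u False] .
    ultimately show ?thesis by simp
  qed
qed

lemma B: "u permutes {1..4} \<Longrightarrow> map u [1,2,3,4] \<in> set L"
proof -
  assume u: "u permutes {1..4}"
  have inj: "inj u" using permutes_inj[OF u] .
  have r: "u x \<in> {1..4}" if "x \<in> {1..4}" for x
    using that by (simp only: permutes_in_image[OF u])
  have e: "{1..4::nat} = {1,2,3,4}" by auto
  have rr: "u 1 \<in> {1,2,3,4}" "u 2 \<in> {1,2,3,4}" "u 3 \<in> {1,2,3,4}" "u 4 \<in> {1,2,3,4}"
    using r[of 1] r[of 2] r[of 3] r[of 4] unfolding e by simp_all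
  have dd: "distinct (map u [1,2,3,4])"
    using inj_eq[OF inj] by simp
  show ?thesis unfolding L_mem using dd rr by simp
qed

lemma C: "xs \<in> set L \<Longrightarrow> p2f xs permutes {1..4}"
proof -
  assume xs: "xs \<in> set L"
  then have d: "distinct xs" and l: "length xs = 4" and s: "set xs \<subseteq> {1,2,3,4}"
    by (auto simp: L_mem)
  have "\<exists>a b c d. xs = [a,b,c,d]" using l by (auto simp: length_Suc_conv numeral_eq_Suc)
  then obtain a b c d where xe: "xs = [a,b,c,d]" by blast
  have e: "{1..4::nat} = {1,2,3,4}" by auto
  have cs: "card (set xs) = 4" using distinct_card[OF d] l by simp
  have se: "set xs = {1,2,3,4}"
    by (rule card_seteq[OF _ s]) (simp_all add: cs)
  have v: "p2f xs 1 = a" "p2f xs 2 = b" "p2f xs 3 = c" "p2f xs 4 = d"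
    by (simp_all add: p2f_def xe)
  have "p2f xs ` {1..4} = {a,b,c,d}" unfolding e by (simp only: image_insert image_empty v)
  also have "\<dots> = set xs" by (simp only: xe list.set)
  also have "\<dots> = {1..4}" using se e by simp
  finally have im: "p2f xs ` {1..4} = {1..4}" .
  have "inj_on (p2f xs) {1..4}"
    by (rule eq_card_imp_inj_on) (simp_all only: im finite_atLeastAtMost)
  then have bij: "bij_betw (p2f xs) {1..4} {1..4}" using im by (simp add: bij_betw_def)
  show ?thesis
  proof (rule bij_imp_permutes[OF bij])
    fix x :: nat assume "x \<notin> {1..4}"
    then show "p2f xs x = x" unfolding p2f_def by (rule if_not_P)
  qed
qed

lemma D: "xs \<in> set L \<Longrightarrow> i \<in> {1..4} \<Longrightarrow> inv (p2f xs) i = index xs i + 1"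
proof -
  assume xs: "xs \<in> set L" and i: "i \<in> {1..4}"
  have p: "p2f xs permutes {1..4}" using C xs .
  have d: "distinct xs" and l: "length xs = 4" and s: "set xs \<subseteq> {1,2,3,4}"
    using xs by (auto simp: L_mem)
  have cs: "card (set xs) = 4" using distinct_card[OF d] l by simp
  have e: "{1..4::nat} = {1,2,3,4}" by auto
  have se: "set xs = {1,2,3,4}"
    by (rule card_seteq[OF _ s]) (simp_all add: cs)
  have iin: "i \<in> set xs" using i unfolding se e .
  have "index xs i < 4" using index_lt[OF iin] l by simp
  then have h: "p2f xs (index xs i + 1) = i" using nth_index[OF iin] by (simp add: p2f_def)
  show ?thesis unfolding permutes_inv_eq[OF p] by (rule h)
qed

lemma E: "(g4 ^^ k) i = (if i \<in> {1..4} then (i - 1 + k) mod 4 + 1 else i)"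
proof (induction k)
  case 0 then show ?case by auto
next
  case (Suc k)
  show ?case
  proof (cases "i \<in> {1..4}")
    case True
    define m where "m = (i - 1 + k) mod 4"
    have IH: "(g4 ^^ k) i = m + 1" using Suc True m_def by simp
    have eq: "(i - 1 + Suc k) mod 4 = (Suc m) mod 4"
      by (simp add: m_def mod_Suc_eq)
    have "m < 4" by (simp add: m_def)
    then have "m = 0 \<or> m = 1 \<or> m = 2 \<or> m = 3" by linarith
    then have "g4 (m + 1) = Suc m mod 4 + 1" by (auto simp: g4_def)
    then show ?thesis using IH eq True by simp
  next
    case False
    have "(g4 ^^ k) i = i" using Suc.IH by (simp only: if_not_P[OF False])
    moreover have "g4 i = i" using False unfolding g4_def by auto
    ultimately have "(g4 ^^ Suc k) i = i" by simp
    then show ?thesis by (simp only: if_not_P[OF False])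
  qed
qed

lemma F: "length xs = 4 \<Longrightarrow> p2f xs \<circ> g4 ^^ k = p2f (rotate k xs)"
proof
  fix i assume l: "length xs = 4"
  show "(p2f xs \<circ> g4 ^^ k) i = p2f (rotate k xs) i"
  proof (cases "i \<in> {1..4}")
    case True
    define m where "m = (i - 1 + k) mod 4"
    have m4: "m < 4" by (simp add: m_def)
    have g: "(g4 ^^ k) i = m + 1" using True by (simp add: E m_def)
    have "p2f xs (m + 1) = xs ! m" using m4 by (simp add: p2f_def)
    moreover have "rotate k xs ! (i - 1) = xs ! ((k + (i - 1)) mod length xs)"
    proof (rule nth_rotate)
      show "i - 1 < length xs" using True l by auto
    qed
    moreover have "(k + (i - 1)) mod length xs = m" using l by (simp add: m_def add.commute)
    moreover have "p2f (rotate k xs) i = rotate k xs ! (i - 1)" using True by (simp add: p2f_def)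
    ultimately show ?thesis using g by simp
  next
    case False
    have "(g4 ^^ k) i = i" by (simp only: E if_not_P[OF False])
    moreover have "p2f xs i = i" "p2f (rotate k xs) i = i" by (simp_all only: p2f_def if_not_P[OF False])
    ultimately show ?thesis by simp
  qed
qed

lemma rot_L: "xs \<in> set L \<Longrightarrow> rotate k xs \<in> set L"
  by (simp add: L_mem)

lemma cost_eq: "ys \<in> set L \<Longrightarrow> zs \<in> set L \<Longrightarrow> rewrite_cost (p2f ys) (p2f zs) = costL ys zs"
proof -
  assume y: "ys \<in> set L" and z: "zs \<in> set L"
  have e: "{1..4::nat} = set [1,2,3,4]" by auto
  have "(\<lambda>i. int (inv (p2f zs) i) - int (inv (p2f ys) i)) ` {1..4}
      = (\<lambda>i. int (index zs i) - int (index ys i)) ` {1..4}"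
    by (rule image_cong) (simp_all add: D[OF y] D[OF z])
  then show ?thesis unfolding rewrite_cost_def costL_def by (simp only: e set_map)
qed

theorem theorem3:
  assumes "h \<in> S4"
  shows "dominating_set S4 G4_edge (coset4 h)"
proof -
  have hp: "h permutes {1..4}" using assms by (simp add: S4_def)
  define xs where "xs = map h [1,2,3,4]"
  have xL: "xs \<in> set L" using B[OF hp] xs_def by simp
  have he: "h = p2f xs" using A[OF hp] xs_def by simp
  have lx: "length xs = 4" by (simp add: xs_def)
  have co: "coset4 h = {p2f (rotate k xs) | k. k < 4}"
    unfolding coset4_def he using F[OF lx] by simp
  have sub: "coset4 h \<subseteq> S4" using co C rot_L xL by (auto simp: S4_def)
  have "\<exists>v\<in>coset4 h. G4_edge u v" if u: "u \<in> S4 - coset4 h" for u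
  proof -
    have up: "u permutes {1..4}" using u by (simp add: S4_def)
    define ys where "ys = map u [1,2,3,4]"
    have yL: "ys \<in> set L" using B[OF up] ys_def by simp
    have ue: "u = p2f ys" using A[OF up] ys_def by simp
    have nr: "\<not> list_ex (\<lambda>k. ys = rotate k xs) [0,1,2,3]"
    proof
      assume "list_ex (\<lambda>k. ys = rotate k xs) [0,1,2,3]"
      then obtain k where "k \<in> set [0,1,2,3::nat]" "ys = rotate k xs" unfolding list_ex_iff by blast
      then have "k < 4" "ys = rotate k xs" by auto
      then have "u \<in> coset4 h" using co ue by auto
      then show False using u by simp
    qed
    have "list_ex (\<lambda>k. costL ys (rotate k xs) = 1) [0,1,2,3]"
      using check_true nr xL yL unfolding check_def list_all_iff by blast
    then obtain k where k0: "k \<in> set [0,1,2,3::nat]" "costL ys (rotate k xs) = 1"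
      unfolding list_ex_iff by blast
    then have k: "k < 4" "costL ys (rotate k xs) = 1" by auto
    have vin: "p2f (rotate k xs) \<in> coset4 h" using co k by auto
    have "G4_edge u (p2f (rotate k xs))"
      unfolding G4_edge_def using u vin sub cost_eq[OF yL rot_L[OF xL]] k ue by auto
    then show ?thesis using vin by blast
  qed
  then show ?thesis using sub unfolding dominating_set_def by blast
qed

end
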